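(* Consider the model below with $M=M_f=N=1$ and $\epsilon_2\ge0$, and let $\bar{\epsilon}_{REE}\in[-\infty,\infty)$ be the number such that a rational expectations equilibrium (REE) exists if and only if $\epsilon_1\ge\bar{\epsilon}_{REE}$. If $\epsilon_1>\bar{\epsilon}_{REE}$, then (i) at most one E-stable REE exists, and (ii) any E-stable REE is of type PP or of type ZP.
   Context: Parameters: $0<\beta<1$, $\sigma,\lambda,\mu>0$, $\psi>1$, $p,q\in(0,1]$. The shock $\epsilon_t$ is a two-state Markov chain on $\{\epsilon_1,\epsilon_2\}$ with transition matrix $K=\begin{pmatrix}p&1-p\\1-q&q\end{pmatrix}$. Model: $x_t=E_t x_{t+1}-\sigma(i_t-E_t\pi_{t+1})+\epsilon_t$, $\pi_t=\lambda x_t+\beta E_t\pi_{t+1}$, $i_t=\max\{\psi\pi_t,-\mu\}$. An REE is a pair $Y_j=(x_j,\pi_j)$, $j=1,2$, with, for $j=1,2$ and $i_j=\max\{\psi\pi_j,-\mu\}$: $x_j=x^e_j-\sigma(i_j-\pi^e_j)+\epsilon_j$, $\pi_j=\lambda x_j+\beta\pi^e_j$, where $(x^e_1,\pi^e_1)=pY_1+(1-p)Y_2$, $(x^e_2,\pi^e_2)=(1-q)Y_1+qY_2$. Types: the ZLB binds in state $j$ if $\psi\pi_j\le-\mu$; type PP (binds in no state), ZP (binds in state 1 only), PZ (binds in state 2 only), ZZ (binds in both). Let $A_P=\frac{1}{1+\lambda\sigma\psi}\begin{pmatrix}1&\sigma-\beta\sigma\psi\\ \lambda&\beta+\lambda\sigma\end{pmatrix}$,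 $A_Z=\begin{pmatrix}1&\sigma\\ \lambda&\beta+\lambda\sigma\end{pmatrix}$, and $I$ the $4\times4$ identity. Define $DT^{PP}=K\otimes A_P-I$, $DT^{ZZ}=K\otimes A_Z-I$, $DT^{ZP}=\begin{pmatrix}pA_Z&(1-p)A_Z\\(1-q)A_P&qA_P\end{pmatrix}-I$, $DT^{PZ}=\begin{pmatrix}pA_P&(1-p)A_P\\(1-q)A_Z&qA_Z\end{pmatrix}-I$. An REE of type $i$ is E-stable if all eigenvalues of $DT^i$ have negative real parts. *)

theory Defs
  imports Complex_Main "HOL-Library.Extended_Real" "Jordan_Normal_Form.Char_Poly"
begin

(* Equilibria are 4-tuples (x1, pi1, x2, pi2), i.e. Y1 = (x1,pi1), Y2 = (x2,pi2).
   States 1,2 of the paper are indices 0,1 below. *)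
type_synonym ree = "real \<times> real \<times> real \<times> real"

definition is_REE ::
  "real \<Rightarrow> real \<Rightarrow> real \<Rightarrow> real \<Rightarrow> real \<Rightarrow> real \<Rightarrow> real \<Rightarrow> real \<Rightarrow> real \<Rightarrow> ree \<Rightarrow> bool" where
  "is_REE \<beta> \<sigma> lam \<mu> \<psi> p q e1 e2 Y =
     (case Y of (x1, \<pi>1, x2, \<pi>2) \<Rightarrow>
       let i1 = max (\<psi> * \<pi>1) (- \<mu>); i2 = max (\<psi> * \<pi>2) (- \<mu>);
           xe1 = p * x1 + (1 - p) * x2; pe1 = p * \<pi>1 + (1 - p) * \<pi>2;
           xe2 = (1 - q) * x1 + q * x2; pe2 = (1 - q) * \<pi>1 + q * \<pi>2
       in x1 = xe1 - \<sigma> * (i1 - pe1) + e1 \<and> \<pi>1 = lam * x1 + \<beta> * pe1 \<and>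
          x2 = xe2 - \<sigma> * (i2 - pe2) + e2 \<and> \<pi>2 = lam * x2 + \<beta> * pe2)"

datatype ree_type = PP | ZP | PZ | ZZ

definition zlb_binds :: "real \<Rightarrow> real \<Rightarrow> real \<Rightarrow> bool" where
  "zlb_binds \<mu> \<psi> \<pi>j = (\<psi> * \<pi>j \<le> - \<mu>)"

definition type_of :: "real \<Rightarrow> real \<Rightarrow> ree \<Rightarrow> ree_type" where
  "type_of \<mu> \<psi> Y = (case Y of (x1, \<pi>1, x2, \<pi>2) \<Rightarrow>
     (if zlb_binds \<mu> \<psi> \<pi>1 then (if zlb_binds \<mu> \<psi> \<pi>2 then ZZ else ZP)
      else (if zlb_binds \<mu> \<psi> \<pi>2 then PZ else PP)))"

definition A_P :: "real \<Rightarrow> real \<Rightarrow> real \<Rightarrow> real \<Rightarrow> nat \<Rightarrow> nat \<Rightarrow> real" where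
  "A_P \<beta> \<sigma> lam \<psi> i j = (1 / (1 + lam * \<sigma> * \<psi>)) *
     (if i = 0 then (if j = 0 then 1 else \<sigma> - \<beta> * \<sigma> * \<psi>)
      else (if j = 0 then lam else \<beta> + lam * \<sigma>))"

definition A_Z :: "real \<Rightarrow> real \<Rightarrow> real \<Rightarrow> nat \<Rightarrow> nat \<Rightarrow> real" where
  "A_Z \<beta> \<sigma> lam i j =
     (if i = 0 then (if j = 0 then 1 else \<sigma>)
      else (if j = 0 then lam else \<beta> + lam * \<sigma>))"

definition Kmat :: "real \<Rightarrow> real \<Rightarrow> nat \<Rightarrow> nat \<Rightarrow> real" where
  "Kmat p q r s = (if r = 0 then (if s = 0 then p else 1 - p)
                   else (if s = 0 then 1 - q else q))"

(* 4x4 matrix whose (r,s) 2x2 block is K_rs * B_r, minus the identity;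
   B_r is the 2x2 matrix used in block row r *)
definition block_DT :: "real \<Rightarrow> real \<Rightarrow> (nat \<Rightarrow> nat \<Rightarrow> nat \<Rightarrow> real) \<Rightarrow> complex mat" where
  "block_DT p q B = mat 4 4 (\<lambda>(i, j).
     complex_of_real (Kmat p q (i div 2) (j div 2) * B (i div 2) (i mod 2) (j mod 2)
                      - (if i = j then 1 else 0)))"

definition DT :: "real \<Rightarrow> real \<Rightarrow> real \<Rightarrow> real \<Rightarrow> real \<Rightarrow> real \<Rightarrow> ree_type \<Rightarrow> complex mat" where
  "DT \<beta> \<sigma> lam \<psi> p q t = (case t of
      PP \<Rightarrow> block_DT p q (\<lambda>r. A_P \<beta> \<sigma> lam \<psi>)
    | ZZ \<Rightarrow> block_DT p q (\<lambda>r. A_Z \<beta> \<sigma> lam)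
    | ZP \<Rightarrow> block_DT p q (\<lambda>r. if r = 0 then A_Z \<beta> \<sigma> lam else A_P \<beta> \<sigma> lam \<psi>)
    | PZ \<Rightarrow> block_DT p q (\<lambda>r. if r = 0 then A_P \<beta> \<sigma> lam \<psi> else A_Z \<beta> \<sigma> lam))"

definition E_stable ::
  "real \<Rightarrow> real \<Rightarrow> real \<Rightarrow> real \<Rightarrow> real \<Rightarrow> real \<Rightarrow> real \<Rightarrow> ree \<Rightarrow> bool" where
  "E_stable \<beta> \<sigma> lam \<mu> \<psi> p q Y =
     (\<forall>k. eigenvalue (DT \<beta> \<sigma> lam \<psi> p q (type_of \<mu> \<psi> Y)) k \<longrightarrow> Re k < 0)"

end

theory Submission
  imports Defs
begin


lemma sum4: "(\<Sum>j<(4::nat). g j) = g 0 + g 1 + g 2 + (g 3 :: 'a::comm_monoid_add)"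
  by (simp add: eval_nat_numeral)

lemma block_DT_eig:
  fixes B :: "nat \<Rightarrow> nat \<Rightarrow> nat \<Rightarrow> real" and va vb vc vd z :: real
  assumes r0: "p * (B 0 0 0 * va + B 0 0 1 * vb) + (1-p) * (B 0 0 0 * vc + B 0 0 1 * vd) = z * va"
    and r1: "p * (B 0 1 0 * va + B 0 1 1 * vb) + (1-p) * (B 0 1 0 * vc + B 0 1 1 * vd) = z * vb"
    and r2: "(1-q) * (B 1 0 0 * va + B 1 0 1 * vb) + q * (B 1 0 0 * vc + B 1 0 1 * vd) = z * vc"
    and r3: "(1-q) * (B 1 1 0 * va + B 1 1 1 * vb) + q * (B 1 1 0 * vc + B 1 1 1 * vd) = z * vd"
    and nz: "va \<noteq> 0 \<or> vb \<noteq> 0 \<or> vc \<noteq> 0 \<or> vd \<noteq> 0"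
  shows "eigenvalue (block_DT p q B) (complex_of_real (z - 1))"
proof -
  define f where "f = (\<lambda>i::nat. complex_of_real (if i = 0 then va else if i = 1 then vb else if i = 2 then vc else vd))"
  define v where "v = vec 4 f"
  have d: "dim_row (block_DT p q B) = 4" by (simp add: block_DT_def)
  have "v \<noteq> 0\<^sub>v 4"
  proof
    assume "v = 0\<^sub>v 4"
    then have "\<And>i. i < 4 \<Longrightarrow> f i = 0" unfolding v_def by (metis index_vec index_zero_vec(1))
    from this[of 0] this[of 1] this[of 2] this[of 3] nz show False by (simp add: f_def)
  qed
  moreover have "block_DT p q B *\<^sub>v v = complex_of_real (z - 1) \<cdot>\<^sub>v v"
  proof (rule eq_vecI)
    fix i assume "i < dim_vec (complex_of_real (z - 1) \<cdot>\<^sub>v v)"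
    then have i: "i < 4" by (simp add: v_def)
    have e: "(block_DT p q B *\<^sub>v v) $ i = (\<Sum>j<4. (block_DT p q B) $$ (i,j) * f j)"
      using i by (simp add: block_DT_def v_def scalar_prod_def lessThan_atLeast0)
    have "i = 0 \<or> i = 1 \<or> i = 2 \<or> i = 3" using i by auto
    then show "(block_DT p q B *\<^sub>v v) $ i = (complex_of_real (z - 1) \<cdot>\<^sub>v v) $ i"
    proof (elim disjE)
      assume "i = 0"
      have R: "(p * B 0 0 0 - 1) * va + p * B 0 0 1 * vb + (1-p) * B 0 0 0 * vc + (1-p) * B 0 0 1 * vd = (z - 1) * va"
        using r0 by (simp add: algebra_simps)
      show ?thesis unfolding e sum4 unfolding \<open>i = 0\<close>
        using arg_cong[OF R, of complex_of_real]
        by (simp add: block_DT_def v_def f_def Kmat_def algebra_simps)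
    next
      assume "i = 1"
      have R: "p * B 0 1 0 * va + (p * B 0 1 1 - 1) * vb + (1-p) * B 0 1 0 * vc + (1-p) * B 0 1 1 * vd = (z - 1) * vb"
        using r1 by (simp add: algebra_simps)
      show ?thesis unfolding e sum4 unfolding \<open>i = 1\<close>
        using arg_cong[OF R, of complex_of_real]
        by (simp add: block_DT_def v_def f_def Kmat_def algebra_simps)
    next
      assume "i = 2"
      have R: "(1-q) * B 1 0 0 * va + (1-q) * B 1 0 1 * vb + (q * B 1 0 0 - 1) * vc + q * B 1 0 1 * vd = (z - 1) * vc"
        using r2 by (simp add: algebra_simps)
      show ?thesis unfolding e sum4 unfolding \<open>i = 2\<close>
        using arg_cong[OF R, of complex_of_real]
        by (simp add: block_DT_def v_def f_def Kmat_def algebra_simps)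
    next
      assume "i = 3"
      have R: "(1-q) * B 1 1 0 * va + (1-q) * B 1 1 1 * vb + q * B 1 1 0 * vc + (q * B 1 1 1 - 1) * vd = (z - 1) * vd"
        using r3 by (simp add: algebra_simps)
      show ?thesis unfolding e sum4 unfolding \<open>i = 3\<close>
        using arg_cong[OF R, of complex_of_real]
        by (simp add: block_DT_def v_def f_def Kmat_def algebra_simps)
    qed
  qed (simp add: block_DT_def v_def)
  ultimately show ?thesis unfolding eigenvalue_def eigenvector_def using d by (intro exI[of _ v]) (auto simp: v_def)
qed

definition g00 :: "real \<Rightarrow> real \<Rightarrow> real \<Rightarrow> real \<Rightarrow> real \<Rightarrow> real \<Rightarrow> real \<Rightarrow> real" where
  "g00 \<beta> k \<psi> p q d w = (1-w*p)*(1-w*\<beta>*p) + w^2*\<beta>*(1-p)*(1-q) + k*\<psi>*d - k*w*p"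
definition g01 :: "real \<Rightarrow> real \<Rightarrow> real \<Rightarrow> real \<Rightarrow> real \<Rightarrow> real" where
  "g01 \<beta> k p q w = -w*(1-p)*(\<beta>*(1-w*p) + (1-w*\<beta>*q) + k)"
definition g10 :: "real \<Rightarrow> real \<Rightarrow> real \<Rightarrow> real \<Rightarrow> real \<Rightarrow> real" where
  "g10 \<beta> k p q w = -w*(1-q)*(\<beta>*(1-w*q) + (1-w*\<beta>*p) + k)"
definition g11 :: "real \<Rightarrow> real \<Rightarrow> real \<Rightarrow> real \<Rightarrow> real \<Rightarrow> real \<Rightarrow> real \<Rightarrow> real" where
  "g11 \<beta> k \<psi> p q d w = (1-w*q)*(1-w*\<beta>*q) + w^2*\<beta>*(1-q)*(1-p) + k*\<psi>*d - k*w*q"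
definition hdet where
  "hdet \<beta> k \<psi> p q d0 d1 w = g00 \<beta> k \<psi> p q d0 w * g11 \<beta> k \<psi> p q d1 w - g01 \<beta> k p q w * g10 \<beta> k p q w"

lemma AZ_row:
  assumes "w * (y0 + \<sigma> * y1) = u0" "- lam * u0 + u1 = w * \<beta> * y1" "w \<noteq> 0"
  shows "A_Z \<beta> \<sigma> lam 0 0 * y0 + A_Z \<beta> \<sigma> lam 0 1 * y1 = (1/w) * u0"
    and "A_Z \<beta> \<sigma> lam 1 0 * y0 + A_Z \<beta> \<sigma> lam 1 1 * y1 = (1/w) * u1"
proof -
  show "A_Z \<beta> \<sigma> lam 0 0 * y0 + A_Z \<beta> \<sigma> lam 0 1 * y1 = (1/w) * u0"
    using assms by (simp add: A_Z_def field_simps)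
  have "w * (lam * y0 + (\<beta> + lam * \<sigma>) * y1) = u1"
  proof -
    have "w * (lam * y0 + (\<beta> + lam * \<sigma>) * y1) = lam * (w * (y0 + \<sigma> * y1)) + w * \<beta> * y1"
      by (simp add: algebra_simps)
    also have "\<dots> = u1" using assms by simp
    finally show ?thesis .
  qed
  then show "A_Z \<beta> \<sigma> lam 1 0 * y0 + A_Z \<beta> \<sigma> lam 1 1 * y1 = (1/w) * u1"
    using assms by (simp add: A_Z_def field_simps)
qed

lemma AP_row:
  assumes "w * (y0 + \<sigma> * y1) = u0 + \<sigma> * \<psi> * u1" "- lam * u0 + u1 = w * \<beta> * y1" "w \<noteq> 0"
    and pos: "1 + lam * \<sigma> * \<psi> > 0"
  shows "A_P \<beta> \<sigma> lam \<psi> 0 0 * y0 + A_P \<beta> \<sigma> lam \<psi> 0 1 * y1 = (1/w) * u0"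
    and "A_P \<beta> \<sigma> lam \<psi> 1 0 * y0 + A_P \<beta> \<sigma> lam \<psi> 1 1 * y1 = (1/w) * u1"
proof -
  have e1: "w * (y0 + (\<sigma> - \<beta> * \<sigma> * \<psi>) * y1) = (1 + lam * \<sigma> * \<psi>) * u0"
  proof -
    have "w * (y0 + (\<sigma> - \<beta> * \<sigma> * \<psi>) * y1) = w * (y0 + \<sigma> * y1) - \<sigma> * \<psi> * (w * \<beta> * y1)"
      by (simp add: algebra_simps)
    also have "\<dots> = (1 + lam * \<sigma> * \<psi>) * u0" using assms(1,2)
      by (simp add: algebra_simps)
    finally show ?thesis .
  qed
  have e2: "w * (lam * y0 + (\<beta> + lam * \<sigma>) * y1) = (1 + lam * \<sigma> * \<psi>) * u1"
  proof -
    have "w * (lam * y0 + (\<beta> + lam * \<sigma>) * y1) = lam * (w * (y0 + \<sigma> * y1)) + w * \<beta> * y1"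
      by (simp add: algebra_simps)
    also have "\<dots> = (1 + lam * \<sigma> * \<psi>) * u1" using assms(1,2)
      by (simp add: algebra_simps)
    finally show ?thesis .
  qed
  have r1: "A_P \<beta> \<sigma> lam \<psi> 0 0 * y0 + A_P \<beta> \<sigma> lam \<psi> 0 1 * y1 = (y0 + (\<sigma> - \<beta> * \<sigma> * \<psi>) * y1) / (1 + lam * \<sigma> * \<psi>)"
    by (simp add: A_P_def add_divide_distrib diff_divide_distrib algebra_simps)
  have r2: "A_P \<beta> \<sigma> lam \<psi> 1 0 * y0 + A_P \<beta> \<sigma> lam \<psi> 1 1 * y1 = (lam * y0 + (\<beta> + lam * \<sigma>) * y1) / (1 + lam * \<sigma> * \<psi>)"
    by (simp add: A_P_def add_divide_distrib diff_divide_distrib algebra_simps)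
  have q1: "y0 + (\<sigma> - \<beta> * \<sigma> * \<psi>) * y1 = (1 + lam * \<sigma> * \<psi>) * u0 / w"
    using e1 assms(3) by (simp add: field_simps)
  have q2: "lam * y0 + (\<beta> + lam * \<sigma>) * y1 = (1 + lam * \<sigma> * \<psi>) * u1 / w"
    using e2 assms(3) by (simp add: field_simps)
  show "A_P \<beta> \<sigma> lam \<psi> 0 0 * y0 + A_P \<beta> \<sigma> lam \<psi> 0 1 * y1 = (1/w) * u0"
    unfolding r1 q1 using pos by simp
  show "A_P \<beta> \<sigma> lam \<psi> 1 0 * y0 + A_P \<beta> \<sigma> lam \<psi> 1 1 * y1 = (1/w) * u1"
    unfolding r2 q2 using pos by simp
qed

lemma kernel_not_stable:
  fixes d0 d1 :: real
  assumes "0 < \<beta>" "0 < \<sigma>" "0 < lam" "1 < \<psi>" "0 < w" "w \<le> 1"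
    and d0: "d0 = 0 \<or> d0 = 1" and d1: "d1 = 0 \<or> d1 = 1"
    and B0: "B 0 = (if d0 = 1 then A_P \<beta> \<sigma> lam \<psi> else A_Z \<beta> \<sigma> lam)"
    and B1: "B 1 = (if d1 = 1 then A_P \<beta> \<sigma> lam \<psi> else A_Z \<beta> \<sigma> lam)"
    and k0: "g00 \<beta> (lam*\<sigma>) \<psi> p q d0 w * \<pi>0 + g01 \<beta> (lam*\<sigma>) p q w * \<pi>1 = 0"
    and k1: "g10 \<beta> (lam*\<sigma>) p q w * \<pi>0 + g11 \<beta> (lam*\<sigma>) \<psi> p q d1 w * \<pi>1 = 0"
    and nz: "\<pi>0 \<noteq> 0 \<or> \<pi>1 \<noteq> 0"
  shows "\<not> (\<forall>k. eigenvalue (block_DT p q B) k \<longrightarrow> Re k < 0)"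
proof -
  define x0 where "x0 = (\<pi>0 - w*\<beta>*(p*\<pi>0 + (1-p)*\<pi>1))/lam"
  define x1 where "x1 = (\<pi>1 - w*\<beta>*((1-q)*\<pi>0 + q*\<pi>1))/lam"
  define y0 where "y0 = p*x0 + (1-p)*x1"
  define y1 where "y1 = p*\<pi>0 + (1-p)*\<pi>1"
  define z0 where "z0 = (1-q)*x0 + q*x1"
  define z1 where "z1 = (1-q)*\<pi>0 + q*\<pi>1"
  have wnz: "w \<noteq> 0" using assms by simp
  have pos: "1 + lam * \<sigma> * \<psi> > 0" using assms by (simp add: add_pos_pos)
  have lx0: "lam * x0 = \<pi>0 - w*\<beta>*(p*\<pi>0 + (1-p)*\<pi>1)" using assms(3) by (simp add: x0_def)
  have lx1: "lam * x1 = \<pi>1 - w*\<beta>*((1-q)*\<pi>0 + q*\<pi>1)" using assms(3) by (simp add: x1_def)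
  have F0: "- lam * x0 + \<pi>0 = w * \<beta> * y1" using lx0 by (simp add: y1_def)
  have F1: "- lam * x1 + \<pi>1 = w * \<beta> * z1" using lx1 by (simp add: z1_def)
  have "lam * (x0 + \<sigma>*\<psi>*d0*\<pi>0 - w*(y0 + \<sigma>*y1)) = g00 \<beta> (lam*\<sigma>) \<psi> p q d0 w * \<pi>0 + g01 \<beta> (lam*\<sigma>) p q w * \<pi>1"
  proof -
    have "lam * (x0 + \<sigma>*\<psi>*d0*\<pi>0 - w*(y0 + \<sigma>*y1)) = (1-w*p)*(lam*x0) - w*(1-p)*(lam*x1) + lam*\<sigma>*\<psi>*d0*\<pi>0 - lam*\<sigma>*w*(p*\<pi>0+(1-p)*\<pi>1)"
      unfolding y0_def y1_def by (simp add: algebra_simps)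
    also have "\<dots> = g00 \<beta> (lam*\<sigma>) \<psi> p q d0 w * \<pi>0 + g01 \<beta> (lam*\<sigma>) p q w * \<pi>1"
      unfolding lx0 lx1 g00_def g01_def by (simp add: algebra_simps power2_eq_square)
    finally show ?thesis .
  qed
  then have E0: "w*(y0 + \<sigma>*y1) = x0 + \<sigma>*\<psi>*d0*\<pi>0" using k0 assms(3) by simp
  have "lam * (x1 + \<sigma>*\<psi>*d1*\<pi>1 - w*(z0 + \<sigma>*z1)) = g10 \<beta> (lam*\<sigma>) p q w * \<pi>0 + g11 \<beta> (lam*\<sigma>) \<psi> p q d1 w * \<pi>1"
  proof -
    have "lam * (x1 + \<sigma>*\<psi>*d1*\<pi>1 - w*(z0 + \<sigma>*z1)) = (1-w*q)*(lam*x1) - w*(1-q)*(lam*x0) + lam*\<sigma>*\<psi>*d1*\<pi>1 - lam*\<sigma>*w*((1-q)*\<pi>0+q*\<pi>1)"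
      unfolding z0_def z1_def by (simp add: algebra_simps)
    also have "\<dots> = g10 \<beta> (lam*\<sigma>) p q w * \<pi>0 + g11 \<beta> (lam*\<sigma>) \<psi> p q d1 w * \<pi>1"
      unfolding lx0 lx1 g10_def g11_def by (simp add: algebra_simps power2_eq_square)
    finally show ?thesis .
  qed
  then have E1: "w*(z0 + \<sigma>*z1) = x1 + \<sigma>*\<psi>*d1*\<pi>1" using k1 assms(3) by simp
  have R0: "B 0 0 0 * y0 + B 0 0 1 * y1 = (1/w) * x0 \<and> B 0 1 0 * y0 + B 0 1 1 * y1 = (1/w) * \<pi>0"
    using d0
  proof
    assume "d0 = 0" then show ?thesis using B0 AZ_row[of w y0 \<sigma> y1 x0 lam \<pi>0 \<beta>] E0 F0 wnz by simp
  next
    assume "d0 = 1" then show ?thesis using B0 AP_row[of w y0 \<sigma> y1 x0 \<psi> \<pi>0 lam \<beta>] E0 F0 wnz pos by simp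
  qed
  have R1: "B 1 0 0 * z0 + B 1 0 1 * z1 = (1/w) * x1 \<and> B 1 1 0 * z0 + B 1 1 1 * z1 = (1/w) * \<pi>1"
    using d1
  proof
    assume "d1 = 0" then show ?thesis using B1 AZ_row[of w z0 \<sigma> z1 x1 lam \<pi>1 \<beta>] E1 F1 wnz by simp
  next
    assume "d1 = 1" then show ?thesis using B1 AP_row[of w z0 \<sigma> z1 x1 \<psi> \<pi>1 lam \<beta>] E1 F1 wnz pos by simp
  qed
  have ev: "eigenvalue (block_DT p q B) (complex_of_real (1/w - 1))"
    apply (rule block_DT_eig[where va = x0 and vb = \<pi>0 and vc = x1 and vd = \<pi>1])
    using R0 R1 nz by (simp_all add: y0_def y1_def z0_def z1_def algebra_simps)
  have "1/w - 1 \<ge> 0" using assms(5,6) by (simp add: field_simps)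
  then show ?thesis using ev by force
qed

lemma ker2:
  fixes a b c d :: real
  assumes "a*d - b*c = 0"
  shows "\<exists>x y. (x \<noteq> 0 \<or> y \<noteq> 0) \<and> a*x + b*y = 0 \<and> c*x + d*y = 0"
proof (cases "a = 0 \<and> b = 0")
  case True
  show ?thesis
  proof (cases "c = 0 \<and> d = 0")
    case True
    then show ?thesis using \<open>a = 0 \<and> b = 0\<close> by (intro exI[of _ 1] exI[of _ 0]) simp
  next
    case False
    then show ?thesis using \<open>a = 0 \<and> b = 0\<close>
      by (intro exI[of _ d] exI[of _ "-c"]) (auto simp: algebra_simps)
  qed
next
  case False
  then show ?thesis using assms
    by (intro exI[of _ b] exI[of _ "-a"]) (auto simp: algebra_simps)
qed

lemma det_not_stable:
  fixes d0 d1 :: real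
  assumes "0 < \<beta>" "0 < \<sigma>" "0 < lam" "1 < \<psi>"
    and d0: "d0 = 0 \<or> d0 = 1" and d1: "d1 = 0 \<or> d1 = 1"
    and B0: "B 0 = (if d0 = 1 then A_P \<beta> \<sigma> lam \<psi> else A_Z \<beta> \<sigma> lam)"
    and B1: "B 1 = (if d1 = 1 then A_P \<beta> \<sigma> lam \<psi> else A_Z \<beta> \<sigma> lam)"
    and h1: "hdet \<beta> (lam*\<sigma>) \<psi> p q d0 d1 1 \<le> 0"
  shows "\<not> (\<forall>k. eigenvalue (block_DT p q B) k \<longrightarrow> Re k < 0)"
proof -
  let ?h = "hdet \<beta> (lam*\<sigma>) \<psi> p q d0 d1"
  have kp: "lam*\<sigma>*\<psi> > 0" using assms by simp
  have "1 + lam*\<sigma>*\<psi>*d0 > 0" using d0 kp by auto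
  moreover have "1 + lam*\<sigma>*\<psi>*d1 > 0" using d1 kp by auto
  ultimately have h0': "(1 + lam*\<sigma>*\<psi>*d0) * (1 + lam*\<sigma>*\<psi>*d1) > 0" by simp
  have "?h 0 = (1 + lam*\<sigma>*\<psi>*d0) * (1 + lam*\<sigma>*\<psi>*d1)"
    by (simp add: hdet_def g00_def g01_def g10_def g11_def)
  with h0' have h0: "?h 0 > 0" by simp
  have cont: "\<forall>x. 0 \<le> x \<and> x \<le> 1 \<longrightarrow> isCont ?h x"
    unfolding hdet_def g00_def g01_def g10_def g11_def by (intro allI impI continuous_intros)
  obtain w where w: "0 \<le> w" "w \<le> 1" "?h w = 0"
    using IVT2[of ?h 1 0 0, OF h1 _ _ cont] h0 by auto
  have "w \<noteq> 0" using w h0 by auto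
  with w have wp: "0 < w" by simp
  obtain x y where xy: "x \<noteq> 0 \<or> y \<noteq> 0"
    "g00 \<beta> (lam*\<sigma>) \<psi> p q d0 w * x + g01 \<beta> (lam*\<sigma>) p q w * y = 0"
    "g10 \<beta> (lam*\<sigma>) p q w * x + g11 \<beta> (lam*\<sigma>) \<psi> p q d1 w * y = 0"
    using ker2[of "g00 \<beta> (lam*\<sigma>) \<psi> p q d0 w" "g11 \<beta> (lam*\<sigma>) \<psi> p q d1 w" "g01 \<beta> (lam*\<sigma>) p q w" "g10 \<beta> (lam*\<sigma>) p q w"]
      w(3) unfolding hdet_def by auto
  show ?thesis
    by (rule kernel_not_stable[OF assms(1-4) wp w(2) d0 d1 B0 B1 xy(2) xy(3) xy(1)])
qed

lemma ZZ_not_stable: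
  fixes \<psi> :: real
  assumes "0 < \<beta>" "\<beta> < 1" "0 < \<sigma>" "0 < lam" "1 < \<psi>"
  shows "\<not> (\<forall>k. eigenvalue (block_DT p q (\<lambda>r. A_Z \<beta> \<sigma> lam)) k \<longrightarrow> Re k < 0)"
proof -
  let ?f = "\<lambda>w::real. (1-w)*(1-\<beta>*w) - lam*\<sigma>*w"
  have cont: "\<forall>x. 0 \<le> x \<and> x \<le> 1 \<longrightarrow> isCont ?f x" by (intro allI impI continuous_intros)
  have f1: "?f 1 \<le> 0" using assms by simp
  obtain w where w: "0 \<le> w" "w \<le> 1" "?f w = 0"
    using IVT2[of ?f 1 0 0, OF f1 _ _ cont] by auto
  have "w \<noteq> 0" using w by auto
  with w have wp: "0 < w" by simp
  have e0: "g00 \<beta> (lam*\<sigma>) \<psi> p q 0 w * 1 + g01 \<beta> (lam*\<sigma>) p q w * 1 = 0"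
  proof -
    have "g00 \<beta> (lam*\<sigma>) \<psi> p q 0 w * 1 + g01 \<beta> (lam*\<sigma>) p q w * 1 = ?f w"
      unfolding g00_def g01_def by (simp add: algebra_simps power2_eq_square)
    then show ?thesis using w(3) by simp
  qed
  have e1: "g10 \<beta> (lam*\<sigma>) p q w * 1 + g11 \<beta> (lam*\<sigma>) \<psi> p q 0 w * 1 = 0"
  proof -
    have "g10 \<beta> (lam*\<sigma>) p q w * 1 + g11 \<beta> (lam*\<sigma>) \<psi> p q 0 w * 1 = ?f w"
      unfolding g10_def g11_def by (simp add: algebra_simps power2_eq_square)
    then show ?thesis using w(3) by simp
  qed
  show ?thesis
    by (rule kernel_not_stable[OF assms(1) assms(3-5) wp w(2) _ _ _ _ e0 e1]) simp_all
qed


lemma REE_red: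
  assumes R: "is_REE \<beta> \<sigma> lam \<mu> \<psi> p q e1 e2 (x1, \<pi>1, x2, \<pi>2)" and lp: "0 < lam"
  shows "g00 \<beta> (lam*\<sigma>) \<psi> p q 0 1 * \<pi>1 + g01 \<beta> (lam*\<sigma>) p q 1 * \<pi>2 + lam*\<sigma>*max (\<psi>*\<pi>1) (-\<mu>) = lam*e1"
    and "g10 \<beta> (lam*\<sigma>) p q 1 * \<pi>1 + g11 \<beta> (lam*\<sigma>) \<psi> p q 0 1 * \<pi>2 + lam*\<sigma>*max (\<psi>*\<pi>2) (-\<mu>) = lam*e2"
    and "lam*x1 = \<pi>1 - \<beta>*(p*\<pi>1 + (1-p)*\<pi>2)"
    and "lam*x2 = \<pi>2 - \<beta>*((1-q)*\<pi>1 + q*\<pi>2)"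
proof -
  define I1 where "I1 = max (\<psi>*\<pi>1) (-\<mu>)"
  define I2 where "I2 = max (\<psi>*\<pi>2) (-\<mu>)"
  have eA: "x1 = (p*x1 + (1-p)*x2) - \<sigma>*(I1 - (p*\<pi>1 + (1-p)*\<pi>2)) + e1"
    and eB: "\<pi>1 = lam*x1 + \<beta>*(p*\<pi>1 + (1-p)*\<pi>2)"
    and eC: "x2 = ((1-q)*x1 + q*x2) - \<sigma>*(I2 - ((1-q)*\<pi>1 + q*\<pi>2)) + e2"
    and eD: "\<pi>2 = lam*x2 + \<beta>*((1-q)*\<pi>1 + q*\<pi>2)"
    using R unfolding is_REE_def Let_def I1_def I2_def by auto
  show L1: "lam*x1 = \<pi>1 - \<beta>*(p*\<pi>1 + (1-p)*\<pi>2)" using eB by simp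
  show L2: "lam*x2 = \<pi>2 - \<beta>*((1-q)*\<pi>1 + q*\<pi>2)" using eD by simp
  have A: "(1-p)*(lam*x1) - (1-p)*(lam*x2) = - lam*\<sigma>*(I1 - (p*\<pi>1 + (1-p)*\<pi>2)) + lam*e1"
  proof -
    have "x1 - (p*x1 + (1-p)*x2) = - \<sigma>*(I1 - (p*\<pi>1 + (1-p)*\<pi>2)) + e1" using eA by simp
    then have "lam * (x1 - (p*x1 + (1-p)*x2)) = lam * (- \<sigma>*(I1 - (p*\<pi>1 + (1-p)*\<pi>2)) + e1)" by simp
    then show ?thesis by (simp add: algebra_simps)
  qed
  have C: "(1-q)*(lam*x2) - (1-q)*(lam*x1) = - lam*\<sigma>*(I2 - ((1-q)*\<pi>1 + q*\<pi>2)) + lam*e2"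
  proof -
    have "x2 - ((1-q)*x1 + q*x2) = - \<sigma>*(I2 - ((1-q)*\<pi>1 + q*\<pi>2)) + e2" using eC by simp
    then have "lam * (x2 - ((1-q)*x1 + q*x2)) = lam * (- \<sigma>*(I2 - ((1-q)*\<pi>1 + q*\<pi>2)) + e2)" by simp
    then show ?thesis by (simp add: algebra_simps)
  qed
  have G1: "g00 \<beta> (lam*\<sigma>) \<psi> p q 0 1 * \<pi>1 + g01 \<beta> (lam*\<sigma>) p q 1 * \<pi>2 = (1-p)*(lam*x1) - (1-p)*(lam*x2) - lam*\<sigma>*(p*\<pi>1 + (1-p)*\<pi>2)"
    unfolding L1 L2 g00_def g01_def by (simp add: algebra_simps power2_eq_square)
  have G2: "g10 \<beta> (lam*\<sigma>) p q 1 * \<pi>1 + g11 \<beta> (lam*\<sigma>) \<psi> p q 0 1 * \<pi>2 = (1-q)*(lam*x2) - (1-q)*(lam*x1) - lam*\<sigma>*((1-q)*\<pi>1 + q*\<pi>2)"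
    unfolding L1 L2 g10_def g11_def by (simp add: algebra_simps power2_eq_square)
  show "g00 \<beta> (lam*\<sigma>) \<psi> p q 0 1 * \<pi>1 + g01 \<beta> (lam*\<sigma>) p q 1 * \<pi>2 + lam*\<sigma>*max (\<psi>*\<pi>1) (-\<mu>) = lam*e1"
    using G1 A unfolding I1_def by (simp add: algebra_simps)
  show "g10 \<beta> (lam*\<sigma>) p q 1 * \<pi>1 + g11 \<beta> (lam*\<sigma>) \<psi> p q 0 1 * \<pi>2 + lam*\<sigma>*max (\<psi>*\<pi>2) (-\<mu>) = lam*e2"
    using G2 C unfolding I2_def by (simp add: algebra_simps)
qed

lemma lin2uniq:
  fixes a b c d x y :: real
  assumes "a*x + b*y = 0" "c*x + d*y = 0" "a*d - b*c \<noteq> 0"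
  shows "x = 0 \<and> y = 0"
proof -
  have "(a*d - b*c) * x = d*(a*x + b*y) - b*(c*x + d*y)" by (simp add: algebra_simps)
  then have "(a*d - b*c) * x = 0" using assms by simp
  then have x: "x = 0" using assms(3) by simp
  have "(a*d - b*c) * y = a*(c*x + d*y) - c*(a*x + b*y)" by (simp add: algebra_simps)
  then have "(a*d - b*c) * y = 0" using assms by simp
  then have "y = 0" using assms(3) by simp
  with x show ?thesis by simp
qed

lemma mixed:
  fixes a0 b c dP k \<psi> \<mu> u1 u2 v1 v2 E1 E2 :: real
  assumes det: "a0*dP - b*c > 0" and "dP > 0" "k > 0" "\<psi> > 0"
    and u: "(a0 + k*\<psi>)*u1 + b*u2 = E1" "c*u1 + dP*u2 = E2"
    and v: "a0*v1 + b*v2 - k*\<mu> = E1" "c*v1 + dP*v2 = E2"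
    and "\<psi>*u1 > -\<mu>" "\<psi>*v1 \<le> -\<mu>"
  shows False
proof -
  have "\<psi>*v1 < \<psi>*u1" using assms by linarith
  then have "v1 < u1" using \<open>\<psi> > 0\<close> by (simp add: mult_less_cancel_left)
  then have D1: "u1 - v1 > 0" by simp
  have r1: "a0*(u1-v1) + b*(u2-v2) = -k*(\<psi>*u1 + \<mu>)" using u v by (simp add: algebra_simps)
  have r2: "c*(u1-v1) + dP*(u2-v2) = 0" using u v by (simp add: algebra_simps)
  have neg: "-k*(\<psi>*u1 + \<mu>) < 0" using assms by simp
  have "(a0*dP - b*c)*(u1-v1) = dP*(a0*(u1-v1) + b*(u2-v2)) - b*(c*(u1-v1) + dP*(u2-v2))"
    by (simp add: algebra_simps)
  also have "\<dots> = dP * (-k*(\<psi>*u1 + \<mu>))" using r1 r2 by simp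
  also have "\<dots> < 0" using neg \<open>dP > 0\<close> by (simp add: mult_pos_neg)
  finally have "(a0*dP - b*c)*(u1-v1) < 0" .
  moreover have "(a0*dP - b*c)*(u1-v1) > 0" using det D1 by simp
  ultimately show False by simp
qed


theorem proposition7:
  fixes \<beta> \<sigma> lam \<mu> \<psi> p q e1 e2 :: real and \<epsilon>bar :: ereal
  assumes "0 < \<beta>" "\<beta> < 1" "0 < \<sigma>" "0 < lam" "0 < \<mu>" "1 < \<psi>"
    and "0 < p" "p \<le> 1" "0 < q" "q \<le> 1"
    and "0 \<le> e2"
    and "\<epsilon>bar \<noteq> \<infinity>"
    and thr: "\<And>e. (\<exists>Y. is_REE \<beta> \<sigma> lam \<mu> \<psi> p q e e2 Y) \<longleftrightarrow> \<epsilon>bar \<le> ereal e"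
    and "\<epsilon>bar < ereal e1"
  shows "(\<forall>Y Y'. is_REE \<beta> \<sigma> lam \<mu> \<psi> p q e1 e2 Y \<and> E_stable \<beta> \<sigma> lam \<mu> \<psi> p q Y \<and>
                is_REE \<beta> \<sigma> lam \<mu> \<psi> p q e1 e2 Y' \<and> E_stable \<beta> \<sigma> lam \<mu> \<psi> p q Y' \<longrightarrow> Y = Y')
       \<and> (\<forall>Y. is_REE \<beta> \<sigma> lam \<mu> \<psi> p q e1 e2 Y \<and> E_stable \<beta> \<sigma> lam \<mu> \<psi> p q Y \<longrightarrow>
                type_of \<mu> \<psi> Y \<in> {PP, ZP})"
proof -
  define k where "k = lam*\<sigma>"
  have kpos: "k > 0" using assms by (simp add: k_def)
  define a0 where "a0 = g00 \<beta> k \<psi> p q 0 1"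
  define aP where "aP = g00 \<beta> k \<psi> p q 1 1"
  define b where "b = g01 \<beta> k p q 1"
  define c where "c = g10 \<beta> k p q 1"
  define dz where "dz = g11 \<beta> k \<psi> p q 0 1"
  define dP where "dP = g11 \<beta> k \<psi> p q 1 1"
  have aPe: "aP = a0 + k*\<psi>" unfolding aP_def a0_def g00_def by simp
  have dPe: "dP = dz + k*\<psi>" unfolding dP_def dz_def g11_def by simp
  have ab: "a0 + b = -k" unfolding a0_def b_def g00_def g01_def by (simp add: algebra_simps power2_eq_square)
  have cd: "c + dz = -k" unfolding c_def dz_def g10_def g11_def by (simp add: algebra_simps power2_eq_square)
  have bneg: "b \<le> 0"
  proof -
    have "\<beta>*q \<le> \<beta>" using assms by (simp add: mult_left_le)
    moreover have "\<beta>*(1-p) \<ge> 0" using assms by simp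
    ultimately have "\<beta>*(1-p) + (1-\<beta>*q) + k > 0" using assms kpos by linarith
    moreover have "p - 1 \<le> 0" using assms by simp
    ultimately have "(p-1)*(\<beta>*(1-p) + (1-\<beta>*q) + k) \<le> 0" by (intro mult_nonpos_nonneg) auto
    then show ?thesis unfolding b_def g01_def by (simp add: algebra_simps)
  qed
  have cneg: "c \<le> 0"
  proof -
    have "\<beta>*p \<le> \<beta>" using assms by (simp add: mult_left_le)
    moreover have "\<beta>*(1-q) \<ge> 0" using assms by simp
    ultimately have "\<beta>*(1-q) + (1-\<beta>*p) + k > 0" using assms kpos by linarith
    moreover have "q - 1 \<le> 0" using assms by simp
    ultimately have "(q-1)*(\<beta>*(1-q) + (1-\<beta>*p) + k) \<le> 0" by (intro mult_nonpos_nonneg) auto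
    then show ?thesis unfolding c_def g10_def by (simp add: algebra_simps)
  qed
  have kpsi: "k < k*\<psi>" using kpos assms(6) mult_strict_left_mono[of 1 \<psi> k] by simp
  have aPpos: "aP > 0" using aPe ab bneg kpos kpsi
    by linarith
  have dPpos: "dP > 0" using dPe cd cneg kpos kpsi
    by linarith
  have bc: "b*c \<ge> 0" using bneg cneg by (simp add: mult_nonpos_nonpos)
  have detPP: "aP*dP - b*c > 0"
  proof -
    have "-b < aP" using aPe ab kpos kpsi by linarith
    moreover have "-c < dP" using dPe cd kpos kpsi by linarith
    ultimately have "(-b)*(-c) < aP*dP" using aPpos bneg cneg
      by (intro mult_strict_mono) auto
    then show ?thesis by simp
  qed
  have nsZZ: "\<not> (\<forall>z. eigenvalue (DT \<beta> \<sigma> lam \<psi> p q ZZ) z \<longrightarrow> Re z < 0)"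
    using ZZ_not_stable[of \<beta> \<sigma> lam \<psi> p q] assms by (simp add: DT_def)
  have nsZP: "\<not> (\<forall>z. eigenvalue (DT \<beta> \<sigma> lam \<psi> p q ZP) z \<longrightarrow> Re z < 0)" if "a0*dP - b*c \<le> 0"
    using det_not_stable[of \<beta> \<sigma> lam \<psi> 0 1 "\<lambda>r. if r = 0 then A_Z \<beta> \<sigma> lam else A_P \<beta> \<sigma> lam \<psi>" p q]
      assms that by (simp add: DT_def hdet_def a0_def dP_def b_def c_def k_def)
  have nsPZ: "\<not> (\<forall>z. eigenvalue (DT \<beta> \<sigma> lam \<psi> p q PZ) z \<longrightarrow> Re z < 0)" if "aP*dz - b*c \<le> 0"
    using det_not_stable[of \<beta> \<sigma> lam \<psi> 1 0 "\<lambda>r. if r = 0 then A_P \<beta> \<sigma> lam \<psi> else A_Z \<beta> \<sigma> lam" p q]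
      assms that by (simp add: DT_def hdet_def aP_def dz_def b_def c_def k_def)
  have rows: "a0 * \<pi>1 + b * \<pi>2 + k*max (\<psi>*\<pi>1) (-\<mu>) = lam*e1
     \<and> c * \<pi>1 + dz * \<pi>2 + k*max (\<psi>*\<pi>2) (-\<mu>) = lam*e2
     \<and> lam*x1 = \<pi>1 - \<beta>*(p*\<pi>1 + (1-p)*\<pi>2) \<and> lam*x2 = \<pi>2 - \<beta>*((1-q)*\<pi>1 + q*\<pi>2)"
    if "is_REE \<beta> \<sigma> lam \<mu> \<psi> p q e1 e2 (x1, \<pi>1, x2, \<pi>2)" for x1 \<pi>1 x2 \<pi>2
    using REE_red[OF that assms(4)] unfolding a0_def b_def c_def dz_def k_def by simp
  have main: "type_of \<mu> \<psi> Y = PP \<or> (type_of \<mu> \<psi> Y = ZP \<and> a0*dP - b*c > 0)"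
    if R: "is_REE \<beta> \<sigma> lam \<mu> \<psi> p q e1 e2 Y" and S: "E_stable \<beta> \<sigma> lam \<mu> \<psi> p q Y" for Y
  proof -
    obtain x1 \<pi>1 x2 \<pi>2 where Y: "Y = (x1, \<pi>1, x2, \<pi>2)" by (cases Y) auto
    have rw: "a0 * \<pi>1 + b * \<pi>2 + k*max (\<psi>*\<pi>1) (-\<mu>) = lam*e1"
      "c * \<pi>1 + dz * \<pi>2 + k*max (\<psi>*\<pi>2) (-\<mu>) = lam*e2" using rows R Y by auto
    have St: "\<forall>z. eigenvalue (DT \<beta> \<sigma> lam \<psi> p q (type_of \<mu> \<psi> Y)) z \<longrightarrow> Re z < 0"
      using S unfolding E_stable_def .
    show ?thesis
    proof (cases "type_of \<mu> \<psi> Y")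
      case PP then show ?thesis by simp
    next
      case ZZ then show ?thesis using St nsZZ by simp
    next
      case ZP
      show ?thesis
      proof (rule ccontr)
        assume "\<not> ?thesis"
        then have "a0*dP - b*c \<le> 0" using ZP by simp
        then show False using nsZP St ZP by simp
      qed
    next
      case PZ
      then have t1: "\<not> \<psi>*\<pi>1 \<le> -\<mu>" and t2: "\<psi>*\<pi>2 \<le> -\<mu>"
        unfolding Y type_of_def zlb_binds_def by (auto split: if_splits)
      have r2: "c * \<pi>1 + dz * \<pi>2 - k*\<mu> = lam*e2" using rw(2) t2 by (simp add: max_def)
      show ?thesis
      proof (cases "dz \<ge> 0")
        case True
        have "c*(\<psi>*\<pi>1) \<le> c*(-\<mu>)" using cneg t1 by (intro mult_left_mono_neg) auto
        moreover have "dz*(\<psi>*\<pi>2) \<le> dz*(-\<mu>)" using True t2 by (intro mult_left_mono) auto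
        moreover have "\<psi>*(lam*e2) = c*(\<psi>*\<pi>1) + dz*(\<psi>*\<pi>2) - k*\<psi>*\<mu>"
          unfolding r2[symmetric] by (simp add: algebra_simps)
        moreover have "c*(-\<mu>) + dz*(-\<mu>) - k*\<psi>*\<mu> = -\<mu>*(c + dz) - k*\<psi>*\<mu>" by (simp add: algebra_simps)
        ultimately have "\<psi>*(lam*e2) \<le> -\<mu>*(c + dz) - k*\<psi>*\<mu>" by linarith
        also have "\<dots> = k*\<mu>*(1 - \<psi>)" using cd by (simp add: algebra_simps)
        also have "\<dots> < 0" using kpos assms(5,6) by (simp add: mult_pos_neg)
        finally have "\<psi>*(lam*e2) < 0" .
        moreover have "\<psi>*(lam*e2) \<ge> 0" using assms by simp
        ultimately show ?thesis by simp
      next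
        case False
        then have "aP*dz < 0" using aPpos by (simp add: mult_pos_neg)
        then have "aP*dz - b*c \<le> 0" using bc by simp
        then show ?thesis using St nsPZ PZ by simp
      qed
    qed
  qed
  have part2: "\<forall>Y. is_REE \<beta> \<sigma> lam \<mu> \<psi> p q e1 e2 Y \<and> E_stable \<beta> \<sigma> lam \<mu> \<psi> p q Y \<longrightarrow>
                type_of \<mu> \<psi> Y \<in> {PP, ZP}"
    using main by blast
  have part1: "Y = Y'" if R: "is_REE \<beta> \<sigma> lam \<mu> \<psi> p q e1 e2 Y" and S: "E_stable \<beta> \<sigma> lam \<mu> \<psi> p q Y"
    and R': "is_REE \<beta> \<sigma> lam \<mu> \<psi> p q e1 e2 Y'" and S': "E_stable \<beta> \<sigma> lam \<mu> \<psi> p q Y'" for Y Y'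
  proof -
    obtain x1 \<pi>1 x2 \<pi>2 where Y: "Y = (x1, \<pi>1, x2, \<pi>2)" by (cases Y) auto
    obtain x1' \<pi>1' x2' \<pi>2' where Y': "Y' = (x1', \<pi>1', x2', \<pi>2')" by (cases Y') auto
    have rw: "a0 * \<pi>1 + b * \<pi>2 + k*max (\<psi>*\<pi>1) (-\<mu>) = lam*e1"
      "c * \<pi>1 + dz * \<pi>2 + k*max (\<psi>*\<pi>2) (-\<mu>) = lam*e2"
      "lam*x1 = \<pi>1 - \<beta>*(p*\<pi>1 + (1-p)*\<pi>2)" "lam*x2 = \<pi>2 - \<beta>*((1-q)*\<pi>1 + q*\<pi>2)"
      using rows R Y by auto
    have rw': "a0 * \<pi>1' + b * \<pi>2' + k*max (\<psi>*\<pi>1') (-\<mu>) = lam*e1"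
      "c * \<pi>1' + dz * \<pi>2' + k*max (\<psi>*\<pi>2') (-\<mu>) = lam*e2"
      "lam*x1' = \<pi>1' - \<beta>*(p*\<pi>1' + (1-p)*\<pi>2')" "lam*x2' = \<pi>2' - \<beta>*((1-q)*\<pi>1' + q*\<pi>2')"
      using rows R' Y' by auto
    have m: "type_of \<mu> \<psi> Y = PP \<or> (type_of \<mu> \<psi> Y = ZP \<and> a0*dP - b*c > 0)" using main R S by blast
    have m': "type_of \<mu> \<psi> Y' = PP \<or> (type_of \<mu> \<psi> Y' = ZP \<and> a0*dP - b*c > 0)" using main R' S' by blast
    have tPP: "\<not> \<psi>*u1 \<le> -\<mu> \<and> \<not> \<psi>*u2 \<le> -\<mu>" if "type_of \<mu> \<psi> (v1, u1, v2, u2) = PP" for v1 u1 v2 u2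
      using that unfolding type_of_def zlb_binds_def by (auto split: if_splits)
    have tZP: "\<psi>*u1 \<le> -\<mu> \<and> \<not> \<psi>*u2 \<le> -\<mu>" if "type_of \<mu> \<psi> (v1, u1, v2, u2) = ZP" for v1 u1 v2 u2
      using that unfolding type_of_def zlb_binds_def by (auto split: if_splits)
    have maxP: "max (\<psi>*u) (-\<mu>) = \<psi>*u" if "\<not> \<psi>*u \<le> -\<mu>" for u using that by simp
    have maxZ: "max (\<psi>*u) (-\<mu>) = -\<mu>" if "\<psi>*u \<le> -\<mu>" for u using that by simp
    have pieq: "\<pi>1 = \<pi>1' \<and> \<pi>2 = \<pi>2'"
      using m m'
    proof (elim disjE conjE)
      assume "type_of \<mu> \<psi> Y = PP" "type_of \<mu> \<psi> Y' = PP"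
      then have t: "\<not> \<psi>*\<pi>1 \<le> -\<mu>" "\<not> \<psi>*\<pi>2 \<le> -\<mu>" "\<not> \<psi>*\<pi>1' \<le> -\<mu>" "\<not> \<psi>*\<pi>2' \<le> -\<mu>"
        using tPP Y Y' by auto
      have h1: "aP*(\<pi>1 - \<pi>1') + b*(\<pi>2 - \<pi>2') = 0" using rw(1) rw'(1) maxP[OF t(1)] maxP[OF t(3)] aPe
        by (simp add: algebra_simps)
      have h2: "c*(\<pi>1 - \<pi>1') + dP*(\<pi>2 - \<pi>2') = 0" using rw(2) rw'(2) maxP[OF t(2)] maxP[OF t(4)] dPe
        by (simp add: algebra_simps)
      have "\<pi>1 - \<pi>1' = 0 \<and> \<pi>2 - \<pi>2' = 0" using lin2uniq[OF h1 h2] detPP by simp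
      then show ?thesis by simp
    next
      assume "type_of \<mu> \<psi> Y = ZP" "type_of \<mu> \<psi> Y' = ZP" "a0*dP - b*c > 0"
      then have t: "\<psi>*\<pi>1 \<le> -\<mu>" "\<not> \<psi>*\<pi>2 \<le> -\<mu>" "\<psi>*\<pi>1' \<le> -\<mu>" "\<not> \<psi>*\<pi>2' \<le> -\<mu>"
        using tZP Y Y' by auto
      have h1: "a0*(\<pi>1 - \<pi>1') + b*(\<pi>2 - \<pi>2') = 0" using rw(1) rw'(1) maxZ[OF t(1)] maxZ[OF t(3)]
        by (simp add: algebra_simps)
      have h2: "c*(\<pi>1 - \<pi>1') + dP*(\<pi>2 - \<pi>2') = 0" using rw(2) rw'(2) maxP[OF t(2)] maxP[OF t(4)] dPe
        by (simp add: algebra_simps)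
      have "\<pi>1 - \<pi>1' = 0 \<and> \<pi>2 - \<pi>2' = 0" using lin2uniq[OF h1 h2] \<open>a0*dP - b*c > 0\<close> by simp
      then show ?thesis by simp
    next
      assume "type_of \<mu> \<psi> Y = PP" "type_of \<mu> \<psi> Y' = ZP" "a0*dP - b*c > 0"
      then have t: "\<not> \<psi>*\<pi>1 \<le> -\<mu>" "\<not> \<psi>*\<pi>2 \<le> -\<mu>" "\<psi>*\<pi>1' \<le> -\<mu>" "\<not> \<psi>*\<pi>2' \<le> -\<mu>"
        using tPP tZP Y Y' by auto
      have u1: "(a0 + k*\<psi>)*\<pi>1 + b*\<pi>2 = lam*e1" using rw(1) maxP[OF t(1)] by (simp add: algebra_simps)
      have u2: "c*\<pi>1 + dP*\<pi>2 = lam*e2" using rw(2) maxP[OF t(2)] dPe by (simp add: algebra_simps)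
      have v1: "a0*\<pi>1' + b*\<pi>2' - k*\<mu> = lam*e1" using rw'(1) maxZ[OF t(3)] by (simp add: algebra_simps)
      have v2: "c*\<pi>1' + dP*\<pi>2' = lam*e2" using rw'(2) maxP[OF t(4)] dPe by (simp add: algebra_simps)
      have "False"
        using mixed[OF \<open>a0*dP - b*c > 0\<close> dPpos kpos _ u1 u2 v1 v2] t(1,3) assms(6) by simp
      then show ?thesis ..
    next
      assume "type_of \<mu> \<psi> Y = ZP" "a0*dP - b*c > 0" "type_of \<mu> \<psi> Y' = PP"
      then have t: "\<psi>*\<pi>1 \<le> -\<mu>" "\<not> \<psi>*\<pi>2 \<le> -\<mu>" "\<not> \<psi>*\<pi>1' \<le> -\<mu>" "\<not> \<psi>*\<pi>2' \<le> -\<mu>"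
        using tPP tZP Y Y' by auto
      have u1: "(a0 + k*\<psi>)*\<pi>1' + b*\<pi>2' = lam*e1" using rw'(1) maxP[OF t(3)] by (simp add: algebra_simps)
      have u2: "c*\<pi>1' + dP*\<pi>2' = lam*e2" using rw'(2) maxP[OF t(4)] dPe by (simp add: algebra_simps)
      have v1: "a0*\<pi>1 + b*\<pi>2 - k*\<mu> = lam*e1" using rw(1) maxZ[OF t(1)] by (simp add: algebra_simps)
      have v2: "c*\<pi>1 + dP*\<pi>2 = lam*e2" using rw(2) maxP[OF t(2)] dPe by (simp add: algebra_simps)
      have "False"
        using mixed[OF \<open>a0*dP - b*c > 0\<close> dPpos kpos _ u1 u2 v1 v2] t(1,3) assms(6) by simp
      then show ?thesis ..
    qed
    have "lam*x1 = lam*x1'" "lam*x2 = lam*x2'" using rw(3,4) rw'(3,4) pieq by simp_all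
    then have "x1 = x1'" "x2 = x2'" using assms(4) by simp_all
    then show ?thesis using Y Y' pieq by simp
  qed
  show ?thesis using part1 part2 by blast
qed

end
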